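(* Let $2\le N\le 4$, $k=2$, $T=2$, and suppose $p_{11}<p_{01}$. Then for every initial belief vector $\omega(1)\in[0,1]^N$, the myopic sensing policy (with any tie-breaking) is optimal. That is, its expected total reward over the two slots equals the maximum expected total reward over the two slots achievable by any sensing policy.
   Context: Opportunistic spectrum access model. There are $N$ channels. The state $S_i(t)\in\{0,1\}$ of channel $i$ in slot $t$ (0 = busy, 1 = idle) evolves as a two-state discrete-time Markov chain with transition probabilities $p_{ij}=\Pr(S_i(t+1)=j\mid S_i(t)=i)$. The chains are independent across channels and all have the same transition probabilities $p_{01},p_{11}\in[0,1]$. The initial states are independent with $\Pr(S_i(1)=1)=\omega_i(1)$. In each slot $t=1,\dots,T$, a secondary user chooses a set $\mathcal{A}(t)$ of exactly $k$ channels to sense, based on past actions and observations. It observes the states of the sensed channels and obtains reward $1$ if at least one sensed channel is idle, and reward $0$ otherwise. The belief $\omega_i(t)$ is the conditional probability that $S_i(t)=1$ given past actions and observations. The expected immediate reward of action $\mathcal{A}(t)$ is $1-\prod_{i\in\mathcal{A}(t)}(1-\omega_i(t))$. Beliefs update as follows: $\omega_i(t+1)=p_{11}$ if $i\in\mathcal{A}(t)$ and $S_i(t)=1$; $\omega_i(t+1)=p_{01}$ if $i\in\mathcal{A}(t)$ and $S_i(t)=0$; and $\omega_i(t+1)=\tau(\omega_i(t))$ if $i\notin\mathcal{A}(t)$, where $\tau(\omega)=\omega p_{11}+(1-\omega)p_{01}$. A policy maps histories to actions. The objective is to maximize the expected total (equivalently, average) reward over slots $1,\dots,T$. The myopic sensing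 policy senses, in every slot, $k$ channels with the largest current beliefs $\omega_i(t)$, i.e. it maximizes the immediate expected reward. *)

theory Defs
  imports Complex_Main "HOL-Library.FuncSet"
begin

text \<open>An observation of a sensed set A is a function A ->E bool (True = idle).
  A (deterministic) two-slot policy is a pair (A1, f): the slot-1 action A1
  and the slot-2 action f o chosen as a function of the slot-1 observation o.\<close>

definition tau :: "real \<Rightarrow> real \<Rightarrow> real \<Rightarrow> real" where
  "tau p01 p11 w = w * p11 + (1 - w) * p01"

definition upd_belief ::
  "real \<Rightarrow> real \<Rightarrow> (nat \<Rightarrow> real) \<Rightarrow> nat set \<Rightarrow> (nat \<Rightarrow> bool) \<Rightarrow> nat \<Rightarrow> real" where
  "upd_belief p01 p11 \<omega> A obs i =
     (if i \<in> A then (if obs i then p11 else p01) else tau p01 p11 (\<omega> i))"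

definition imm_reward :: "(nat \<Rightarrow> real) \<Rightarrow> nat set \<Rightarrow> real" where
  "imm_reward \<omega> A = 1 - (\<Prod>i\<in>A. 1 - \<omega> i)"

definition obs_prob :: "(nat \<Rightarrow> real) \<Rightarrow> nat set \<Rightarrow> (nat \<Rightarrow> bool) \<Rightarrow> real" where
  "obs_prob \<omega> A obs = (\<Prod>i\<in>A. if obs i then \<omega> i else 1 - \<omega> i)"

definition observations :: "nat set \<Rightarrow> (nat \<Rightarrow> bool) set" where
  "observations A = PiE A (\<lambda>_. UNIV)"

definition valid_action :: "nat \<Rightarrow> nat \<Rightarrow> nat set \<Rightarrow> bool" where
  "valid_action N k A \<longleftrightarrow> A \<subseteq> {..<N} \<and> card A = k"

type_synonym policy2 = "nat set \<times> ((nat \<Rightarrow> bool) \<Rightarrow> nat set)"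

definition is_policy2 :: "nat \<Rightarrow> nat \<Rightarrow> policy2 \<Rightarrow> bool" where
  "is_policy2 N k \<pi> \<longleftrightarrow> valid_action N k (fst \<pi>) \<and>
     (\<forall>obs \<in> observations (fst \<pi>). valid_action N k (snd \<pi> obs))"

definition value2 :: "real \<Rightarrow> real \<Rightarrow> (nat \<Rightarrow> real) \<Rightarrow> policy2 \<Rightarrow> real" where
  "value2 p01 p11 \<omega> \<pi> =
     imm_reward \<omega> (fst \<pi>) +
     (\<Sum>obs \<in> observations (fst \<pi>).
        obs_prob \<omega> (fst \<pi>) obs *
        imm_reward (upd_belief p01 p11 \<omega> (fst \<pi>) obs) (snd \<pi> obs))"

definition myopic_action :: "nat \<Rightarrow> nat \<Rightarrow> (nat \<Rightarrow> real) \<Rightarrow> nat set \<Rightarrow> bool" where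
  "myopic_action N k \<omega> A \<longleftrightarrow> valid_action N k A \<and>
     (\<forall>i\<in>A. \<forall>j\<in>{..<N} - A. \<omega> j \<le> \<omega> i)"

definition myopic_policy2 ::
  "nat \<Rightarrow> nat \<Rightarrow> real \<Rightarrow> real \<Rightarrow> (nat \<Rightarrow> real) \<Rightarrow> policy2 \<Rightarrow> bool" where
  "myopic_policy2 N k p01 p11 \<omega> \<pi> \<longleftrightarrow> myopic_action N k \<omega> (fst \<pi>) \<and>
     (\<forall>obs \<in> observations (fst \<pi>).
        myopic_action N k (upd_belief p01 p11 \<omega> (fst \<pi>) obs) (snd \<pi> obs))"

end

theory Submission
  imports Defs
begin


definition FL :: "real \<Rightarrow> real \<Rightarrow> real \<Rightarrow> real \<Rightarrow> real \<Rightarrow> real \<Rightarrow> real" where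
  "FL u d x y z w = (1-x)*(1-y)*(1+u^2) + ((1-x)*y + x*(1-y)) * u * (u + d * min z w)
     + x*y*(u+d*z)*(u+d*w)"

lemma FL_sym12: "FL u d x y z w = FL u d y x z w"
  unfolding FL_def by (simp add: algebra_simps)
lemma FL_sym34: "FL u d x y z w = FL u d x y w z"
  unfolding FL_def by (simp add: algebra_simps min.commute)

lemma FL_swap:
  assumes x: "0 \<le> x" "x \<le> 1" and y: "0 \<le> y" "y \<le> 1" and z: "0 \<le> z" "z \<le> 1"
    and w: "0 \<le> w" "w \<le> 1" and zy: "z \<le> y" and u: "0 \<le> u" and d: "0 \<le> d" and ud: "u + d \<le> 1"
  shows "FL u d x y z w \<le> FL u d x z y w"
proof -
  have sw: "u + d*w \<le> u + d" using d w by (simp add: mult_left_le)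
  have sw0: "0 \<le> u + d*w" using u d w by simp
  have u1: "u \<le> 1" using u d ud by linarith
  have uu: "0 \<le> u*u" using u by simp
  show ?thesis
  proof (cases "w \<le> z")
    case True
    have e: "FL u d x z y w - FL u d x y z w = (y-z)*(1-x)*(1+u^2-u*(u+d*w))"
      using True zy unfolding FL_def by (simp add: min_absorb2 algebra_simps power2_eq_square)
    have "u*(u+d*w) \<le> 1*1" using u1 sw ud u sw0 by (intro mult_mono) auto
    then have "0 \<le> 1+u^2-u*(u+d*w)" unfolding power2_eq_square using uu by linarith
    then have "0 \<le> (y-z)*(1-x)*(1+u^2-u*(u+d*w))" using zy x
      by (intro mult_nonneg_nonneg) auto
    with e show ?thesis by linarith
  next
    case False
    show ?thesis
    proof (cases "w \<le> y")
      case True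
      have e: "FL u d x z y w - FL u d x y z w =
          (y-z)*(1-x)*(1+u^2-u*(u+d*z)) + u*d*(w-z)*(x*(1-y)+z*(1-x))"
        using True False zy unfolding FL_def by (simp add: min_absorb1 min_absorb2 algebra_simps power2_eq_square)
      have "u*(u+d*z) \<le> 1*1" using u1 ud u d z mult_left_le[of z d] by (intro mult_mono) auto
      then have "0 \<le> 1+u^2-u*(u+d*z)" unfolding power2_eq_square using uu by linarith
      then have "0 \<le> (y-z)*(1-x)*(1+u^2-u*(u+d*z))" using zy x
        by (intro mult_nonneg_nonneg) auto
      moreover have "0 \<le> u*d*(w-z)*(x*(1-y)+z*(1-x))" using u d False x y z
        by (intro mult_nonneg_nonneg add_nonneg_nonneg) auto
      ultimately show ?thesis using e by linarith
    next
      case F2: False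
      have e: "FL u d x z y w - FL u d x y z w = (y-z)*((1-x)+x*u*(u+d-(u+d*w)))"
        using F2 False zy unfolding FL_def by (simp add: min_absorb1 min_absorb2 algebra_simps power2_eq_square)
      have "0 \<le> (y-z)*((1-x)+x*u*(u+d-(u+d*w)))" using zy x u sw
        by (intro mult_nonneg_nonneg add_nonneg_nonneg) auto
      with e show ?thesis by linarith
    qed
  qed
qed


lemma tau_alt: "tau p01 p11 w = p01 - (p01 - p11) * w"
  unfolding tau_def by (simp add: algebra_simps)

lemma tau_bounds:
  assumes "0 \<le> w" "w \<le> 1" "p11 \<le> p01"
  shows "p11 \<le> tau p01 p11 w" "tau p01 p11 w \<le> p01"
proof -
  have "(p01 - p11) * w \<le> (p01 - p11) * 1" using assms by (intro mult_left_mono) auto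
  moreover have "0 \<le> (p01 - p11) * w" using assms by simp
  ultimately show "p11 \<le> tau p01 p11 w" "tau p01 p11 w \<le> p01" unfolding tau_alt by auto
qed

lemma tau_anti:
  assumes "w \<le> w'" "p11 \<le> p01"
  shows "tau p01 p11 w' \<le> tau p01 p11 w"
proof -
  have "(p01 - p11) * w \<le> (p01 - p11) * w'" using assms by (intro mult_left_mono) auto
  then show ?thesis unfolding tau_alt by auto
qed

lemma one_minus_tau: "1 - tau p01 p11 w = (1 - p01) + (p01 - p11) * w"
  unfolding tau_alt by simp

definition ob :: "nat \<Rightarrow> nat \<Rightarrow> bool \<Rightarrow> bool \<Rightarrow> nat \<Rightarrow> bool" where
  "ob a b v1 v2 = (\<lambda>i. if i = a then v1 else if i = b then v2 else undefined)"

lemma observations_two: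
  assumes "a \<noteq> b"
  shows "observations {a,b} = (\<lambda>(v1,v2). ob a b v1 v2) ` {(True,True),(True,False),(False,True),(False,False)}"
proof
  show "observations {a, b} \<subseteq> (\<lambda>(v1,v2). ob a b v1 v2) ` {(True,True),(True,False),(False,True),(False,False)}"
  proof
    fix f assume f: "f \<in> observations {a,b}"
    have "f = ob a b (f a) (f b)"
    proof
      fix i show "f i = ob a b (f a) (f b) i"
        using f assms PiE_arb[of f "{a,b}" "\<lambda>_. UNIV" i] unfolding ob_def observations_def by auto
    qed
    then show "f \<in> (\<lambda>(v1,v2). ob a b v1 v2) ` {(True,True),(True,False),(False,True),(False,False)}"
      by (cases "f a"; cases "f b") auto
  qed
next
  show "(\<lambda>(v1,v2). ob a b v1 v2) ` {(True,True),(True,False),(False,True),(False,False)} \<subseteq> observations {a,b}"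
    unfolding ob_def observations_def by (auto simp: PiE_iff extensional_def)
qed

lemma ob_inj:
  assumes "a \<noteq> b"
  shows "inj_on (\<lambda>(v1,v2). ob a b v1 v2) X"
proof (rule inj_onI, clarify)
  fix v1 v2 w1 w2 assume "ob a b v1 v2 = ob a b w1 w2"
  then have "ob a b v1 v2 a = ob a b w1 w2 a" "ob a b v1 v2 b = ob a b w1 w2 b" by auto
  then show "v1 = w1 \<and> v2 = w2" using assms unfolding ob_def by auto
qed

lemma sum_obs_two:
  assumes "a \<noteq> b"
  shows "(\<Sum>obs\<in>observations {a,b}. g obs) =
    g (ob a b True True) + g (ob a b True False) + g (ob a b False True) + g (ob a b False False)"
  unfolding observations_two[OF assms] by (subst sum.reindex[OF ob_inj[OF assms]]) (simp add: add.assoc)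

lemma upd_ob:
  assumes "a \<noteq> b"
  shows "upd_belief p01 p11 \<omega> {a,b} (ob a b v1 v2) i =
     (if i = a then (if v1 then p11 else p01) else if i = b then (if v2 then p11 else p01)
      else tau p01 p11 (\<omega> i))"
  using assms unfolding upd_belief_def ob_def by auto

lemma obs_prob_ob:
  assumes "a \<noteq> b"
  shows "obs_prob \<omega> {a,b} (ob a b v1 v2) =
     (if v1 then \<omega> a else 1 - \<omega> a) * (if v2 then \<omega> b else 1 - \<omega> b)"
  using assms unfolding obs_prob_def ob_def by auto

lemma prod_myopic:
  fixes x :: "nat \<Rightarrow> real"
  assumes B: "valid_action N 2 B" and B': "valid_action N 2 B'"
    and my: "\<forall>i\<in>B. \<forall>j\<in>{..<N}-B. x j \<le> x i" and x1: "\<forall>i<N. x i \<le> 1"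
  shows "(\<Prod>i\<in>B. 1 - x i) \<le> (\<Prod>i\<in>B'. 1 - x i)"
proof -
  obtain a b where ab: "B = {a,b}" "a \<noteq> b" using B unfolding valid_action_def card_2_iff by auto
  obtain c d where cd: "B' = {c,d}" "c \<noteq> d" using B' unfolding valid_action_def card_2_iff by auto
  have lt: "a < N" "b < N" "c < N" "d < N" using B B' ab cd unfolding valid_action_def by auto
  have nn: "\<And>i. i < N \<Longrightarrow> 0 \<le> 1 - x i" using x1 by auto
  have PB: "(\<Prod>i\<in>B. 1 - x i) = (1 - x a) * (1 - x b)" using ab by simp
  have PB': "(\<Prod>i\<in>B'. 1 - x i) = (1 - x c) * (1 - x d)" using cd by simp
  have key: "(1 - x a) * (1 - x b) \<le> (1 - x c) * (1 - x d)"
  proof (cases "c \<in> B")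
    case cB: True
    show ?thesis
    proof (cases "d \<in> B")
      case True
      with cB cd ab have "(c = a \<and> d = b) \<or> (c = b \<and> d = a)" by auto
      then show ?thesis by (auto simp: mult.commute)
    next
      case False
      then have xd: "x d \<le> x a" "x d \<le> x b" using my lt(4) ab by auto
      from cB ab have "c = a \<or> c = b" by auto
      then show ?thesis
      proof
        assume ca: "c = a"
        have "(1 - x a) * (1 - x b) \<le> (1 - x a) * (1 - x d)"
          using xd nn[OF lt(1)] by (intro mult_left_mono) auto
        then show ?thesis using ca by simp
      next
        assume cb: "c = b"
        have "(1 - x b) * (1 - x a) \<le> (1 - x b) * (1 - x d)"
          using xd nn[OF lt(2)] by (intro mult_left_mono) auto
        then show ?thesis using cb by (simp add: mult.commute)
      qed
    qed
  next
    case cB: False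
    show ?thesis
    proof (cases "d \<in> B")
      case True
      then have xc: "x c \<le> x a" "x c \<le> x b" using my lt(3) ab cB by auto
      from True ab have "d = a \<or> d = b" by auto
      then show ?thesis
      proof
        assume da: "d = a"
        have "(1 - x a) * (1 - x b) \<le> (1 - x a) * (1 - x c)"
          using xc nn[OF lt(1)] by (intro mult_left_mono) auto
        then show ?thesis using da by (simp add: mult.commute)
      next
        assume db: "d = b"
        have "(1 - x a) * (1 - x b) \<le> (1 - x c) * (1 - x b)"
          using xc nn[OF lt(2)] by (intro mult_right_mono) auto
        then show ?thesis using db by simp
      qed
    next
      case False
      then have h: "x c \<le> x a" "x d \<le> x b" using my lt ab cB by auto
      show ?thesis using h nn[OF lt(3)] nn[OF lt(2)] by (intro mult_mono) auto
    qed
  qed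
  show ?thesis using key PB PB' by simp
qed

definition best :: "nat \<Rightarrow> (nat \<Rightarrow> real) \<Rightarrow> real" where
  "best N x = Max ((\<lambda>B. imm_reward x B) ` {B. valid_action N 2 B})"

lemma finite_valid: "finite {B. valid_action N k B}"
  by (rule finite_subset[of _ "Pow {..<N}"]) (auto simp: valid_action_def)

lemma best_ge: "valid_action N 2 B \<Longrightarrow> imm_reward x B \<le> best N x"
  unfolding best_def by (rule Max_ge) (auto intro: finite_valid)

lemma best_eq:
  fixes x :: "nat \<Rightarrow> real"
  assumes B: "valid_action N 2 B"
    and my: "\<forall>i\<in>B. \<forall>j\<in>{..<N}-B. x j \<le> x i" and x1: "\<forall>i<N. x i \<le> 1"
  shows "best N x = imm_reward x B"
  unfolding best_def
proof (rule Max_eqI)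
  show "finite ((\<lambda>B. imm_reward x B) ` {B. valid_action N 2 B})" by (auto intro: finite_valid)
  show "imm_reward x B \<in> (\<lambda>B. imm_reward x B) ` {B. valid_action N 2 B}" using B by auto
  fix y assume "y \<in> (\<lambda>B. imm_reward x B) ` {B. valid_action N 2 B}"
  then obtain B' where "valid_action N 2 B'" "y = imm_reward x B'" by auto
  then show "y \<le> imm_reward x B" unfolding imm_reward_def
    using prod_myopic[OF B _ my x1] by auto
qed

definition W :: "nat \<Rightarrow> real \<Rightarrow> real \<Rightarrow> (nat \<Rightarrow> real) \<Rightarrow> nat set \<Rightarrow> real" where
  "W N p01 p11 \<omega> A = imm_reward \<omega> A +
     (\<Sum>obs \<in> observations A. obs_prob \<omega> A obs * best N (upd_belief p01 p11 \<omega> A obs))"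



lemma imm2: "a \<noteq> b \<Longrightarrow> imm_reward x {a,b} = 1 - (1 - x a) * (1 - x b)"
  unfolding imm_reward_def by simp

lemma W4:
  assumes ud: "{..<N} = {a,b,c,d}" and dist: "a\<noteq>b" "a\<noteq>c" "a\<noteq>d" "b\<noteq>c" "b\<noteq>d" "c\<noteq>d"
    and cd: "\<omega> c \<le> \<omega> d" and wc: "0 \<le> \<omega> c" "\<omega> c \<le> 1" and wd: "0 \<le> \<omega> d" "\<omega> d \<le> 1"
    and p: "0 \<le> p11" "p11 \<le> p01" "p01 \<le> 1"
  shows "W N p01 p11 \<omega> {a,b} = 2 - FL (1-p01) (p01-p11) (\<omega> a) (\<omega> b) (\<omega> c) (\<omega> d)"
proof -
  define x where "x = (\<lambda>v1 v2. upd_belief p01 p11 \<omega> {a,b} (ob a b v1 v2))"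
  have xa: "\<And>v1 v2. x v1 v2 a = (if v1 then p11 else p01)"
   and xb: "\<And>v1 v2. x v1 v2 b = (if v2 then p11 else p01)"
   and xc: "\<And>v1 v2. x v1 v2 c = tau p01 p11 (\<omega> c)"
   and xd: "\<And>v1 v2. x v1 v2 d = tau p01 p11 (\<omega> d)"
    unfolding x_def using dist by (auto simp: upd_ob)
  have xx: "\<And>v1 v2. upd_belief p01 p11 \<omega> {a,b} (ob a b v1 v2) = x v1 v2" by (simp add: x_def)
  have tc: "p11 \<le> tau p01 p11 (\<omega> c)" "tau p01 p11 (\<omega> c) \<le> p01" using tau_bounds wc p by auto
  have td: "p11 \<le> tau p01 p11 (\<omega> d)" "tau p01 p11 (\<omega> d) \<le> p01" using tau_bounds wd p by auto
  have tcd: "tau p01 p11 (\<omega> d) \<le> tau p01 p11 (\<omega> c)" using tau_anti cd p by auto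
  have iN: "\<And>i. i < N \<longleftrightarrow> i = a \<or> i = b \<or> i = c \<or> i = d" using ud by blast
  have x1: "\<And>v1 v2. \<forall>i<N. x v1 v2 i \<le> 1"
    using iN xa xb xc xd tc td p by auto
  have va: "\<And>i j. i \<in> {a,b,c,d} \<Longrightarrow> j \<in> {a,b,c,d} \<Longrightarrow> i \<noteq> j \<Longrightarrow> valid_action N 2 {i,j}"
    unfolding valid_action_def using ud by auto
  have dif: "\<And>i j. {..<N} - {i,j} = {a,b,c,d} - {i,j}" using ud by simp
  have b1: "best N (x True True) = imm_reward (x True True) {c,d}"
    by (rule best_eq[OF va]) (use x1 dist xa xb xc xd tc td tcd p in \<open>auto simp: dif\<close>)
  have b2: "best N (x True False) = imm_reward (x True False) {b,c}"
    by (rule best_eq[OF va]) (use x1 dist xa xb xc xd tc td tcd p in \<open>auto simp: dif\<close>)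
  have b3: "best N (x False True) = imm_reward (x False True) {a,c}"
    by (rule best_eq[OF va]) (use x1 dist xa xb xc xd tc td tcd p in \<open>auto simp: dif\<close>)
  have b4: "best N (x False False) = imm_reward (x False False) {a,b}"
    by (rule best_eq[OF va]) (use x1 dist xa xb xc xd tc td tcd p in \<open>auto simp: dif\<close>)
  have "W N p01 p11 \<omega> {a,b} = 1 - (1 - \<omega> a) * (1 - \<omega> b) +
     (\<omega> a * \<omega> b * (1 - (1 - tau p01 p11 (\<omega> c)) * (1 - tau p01 p11 (\<omega> d)))
      + \<omega> a * (1 - \<omega> b) * (1 - (1 - p01) * (1 - tau p01 p11 (\<omega> c)))
      + (1 - \<omega> a) * \<omega> b * (1 - (1 - p01) * (1 - tau p01 p11 (\<omega> c)))
      + (1 - \<omega> a) * (1 - \<omega> b) * (1 - (1 - p01) * (1 - p01)))"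
    unfolding W_def sum_obs_two[OF dist(1)] obs_prob_ob[OF dist(1)]
    using b1 b2 b3 b4 xx dist xa xb xc xd by (simp add: imm2)
  also have "\<dots> = 2 - FL (1-p01) (p01-p11) (\<omega> a) (\<omega> b) (\<omega> c) (\<omega> d)"
    unfolding FL_def one_minus_tau min_absorb1[OF cd] by (simp add: algebra_simps power2_eq_square)
  finally show ?thesis .
qed

lemma W3:
  assumes ud: "{..<N} = {a,b,c}" and dist: "a\<noteq>b" "a\<noteq>c" "b\<noteq>c"
    and wc: "0 \<le> \<omega> c" "\<omega> c \<le> 1"
    and p: "0 \<le> p11" "p11 \<le> p01" "p01 \<le> 1"
  shows "W N p01 p11 \<omega> {a,b} = 2 - FL (1-p01) (p01-p11) (\<omega> a) (\<omega> b) (\<omega> c) 1"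
proof -
  define x where "x = (\<lambda>v1 v2. upd_belief p01 p11 \<omega> {a,b} (ob a b v1 v2))"
  have xa: "\<And>v1 v2. x v1 v2 a = (if v1 then p11 else p01)"
   and xb: "\<And>v1 v2. x v1 v2 b = (if v2 then p11 else p01)"
   and xc: "\<And>v1 v2. x v1 v2 c = tau p01 p11 (\<omega> c)"
    unfolding x_def using dist by (auto simp: upd_ob)
  have xx: "\<And>v1 v2. upd_belief p01 p11 \<omega> {a,b} (ob a b v1 v2) = x v1 v2" by (simp add: x_def)
  have tc: "p11 \<le> tau p01 p11 (\<omega> c)" "tau p01 p11 (\<omega> c) \<le> p01" using tau_bounds wc p by auto
  have iN: "\<And>i. i < N \<longleftrightarrow> i = a \<or> i = b \<or> i = c" using ud by blast
  have x1: "\<And>v1 v2. \<forall>i<N. x v1 v2 i \<le> 1"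
    using iN xa xb xc tc p by auto
  have va: "\<And>i j. i \<in> {a,b,c} \<Longrightarrow> j \<in> {a,b,c} \<Longrightarrow> i \<noteq> j \<Longrightarrow> valid_action N 2 {i,j}"
    unfolding valid_action_def using ud by auto
  have dif: "\<And>i j. {..<N} - {i,j} = {a,b,c} - {i,j}" using ud by simp
  have b1: "best N (x True True) = imm_reward (x True True) {a,c}"
    by (rule best_eq[OF va]) (use x1 dist xa xb xc tc p in \<open>auto simp: dif\<close>)
  have b2: "best N (x True False) = imm_reward (x True False) {b,c}"
    by (rule best_eq[OF va]) (use x1 dist xa xb xc tc p in \<open>auto simp: dif\<close>)
  have b3: "best N (x False True) = imm_reward (x False True) {a,c}"
    by (rule best_eq[OF va]) (use x1 dist xa xb xc tc p in \<open>auto simp: dif\<close>)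
  have b4: "best N (x False False) = imm_reward (x False False) {a,b}"
    by (rule best_eq[OF va]) (use x1 dist xa xb xc tc p in \<open>auto simp: dif\<close>)
  have "W N p01 p11 \<omega> {a,b} = 1 - (1 - \<omega> a) * (1 - \<omega> b) +
     (\<omega> a * \<omega> b * (1 - (1 - p11) * (1 - tau p01 p11 (\<omega> c)))
      + \<omega> a * (1 - \<omega> b) * (1 - (1 - p01) * (1 - tau p01 p11 (\<omega> c)))
      + (1 - \<omega> a) * \<omega> b * (1 - (1 - p01) * (1 - tau p01 p11 (\<omega> c)))
      + (1 - \<omega> a) * (1 - \<omega> b) * (1 - (1 - p01) * (1 - p01)))"
    unfolding W_def sum_obs_two[OF dist(1)] obs_prob_ob[OF dist(1)]
    using b1 b2 b3 b4 xx dist xa xb xc by (simp add: imm2)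
  also have "\<dots> = 2 - FL (1-p01) (p01-p11) (\<omega> a) (\<omega> b) (\<omega> c) 1"
    unfolding FL_def one_minus_tau min_absorb1[OF wc(2)] by (simp add: algebra_simps power2_eq_square)
  finally show ?thesis .
qed



lemma FL_sym4: "K \<le> FL u d x y z w \<Longrightarrow>
   K \<le> FL u d x y z w \<and> K \<le> FL u d y x z w \<and> K \<le> FL u d x y w z \<and> K \<le> FL u d y x w z"
  by (metis FL_sym12 FL_sym34)

lemma cmp4:
  assumes S: "{p,q,r,t} = {a,b,c,d}"
    and dp: "p\<noteq>q" "p\<noteq>r" "p\<noteq>t" "q\<noteq>r" "q\<noteq>t" "r\<noteq>t"
    and da: "a\<noteq>b" "a\<noteq>c" "a\<noteq>d" "b\<noteq>c" "b\<noteq>d" "c\<noteq>d"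
    and w: "0 \<le> \<omega> a" "\<omega> a \<le> 1" "0 \<le> \<omega> b" "\<omega> b \<le> 1" "0 \<le> \<omega> c" "\<omega> c \<le> 1" "0 \<le> \<omega> d" "\<omega> d \<le> 1"
    and o: "\<omega> c \<le> \<omega> a" "\<omega> c \<le> \<omega> b" "\<omega> d \<le> \<omega> a" "\<omega> d \<le> \<omega> b"
    and u: "0 \<le> u" "0 \<le> e" "u + e \<le> 1"
  shows "FL u e (\<omega> a) (\<omega> b) (\<omega> c) (\<omega> d) \<le> FL u e (\<omega> p) (\<omega> q) (\<omega> r) (\<omega> t)"
proof -
  define F where "F = FL u e (\<omega> a) (\<omega> b) (\<omega> c) (\<omega> d)"
  have h0: "F \<le> FL u e (\<omega> a) (\<omega> b) (\<omega> c) (\<omega> d)" unfolding F_def by simp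
  have h1: "F \<le> FL u e (\<omega> a) (\<omega> c) (\<omega> b) (\<omega> d)" unfolding F_def
    by (rule FL_swap) (use w o u in auto)
  have h2: "F \<le> FL u e (\<omega> a) (\<omega> d) (\<omega> b) (\<omega> c)" unfolding F_def
    by (subst FL_sym34, rule FL_swap) (use w o u in auto)
  have h3: "F \<le> FL u e (\<omega> b) (\<omega> c) (\<omega> a) (\<omega> d)" unfolding F_def
    by (subst FL_sym12, rule FL_swap) (use w o u in auto)
  have h4: "F \<le> FL u e (\<omega> b) (\<omega> d) (\<omega> a) (\<omega> c)" unfolding F_def
    by (subst FL_sym12, subst FL_sym34, rule FL_swap) (use w o u in auto)
  have "FL u e (\<omega> a) (\<omega> c) (\<omega> b) (\<omega> d) = FL u e (\<omega> c) (\<omega> a) (\<omega> d) (\<omega> b)"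
    by (metis FL_sym12 FL_sym34)
  also have "\<dots> \<le> FL u e (\<omega> c) (\<omega> d) (\<omega> a) (\<omega> b)"
    by (rule FL_swap) (use w o u in auto)
  finally have h5: "F \<le> FL u e (\<omega> c) (\<omega> d) (\<omega> a) (\<omega> b)" using h1 by simp
  note hs = FL_sym4[OF h0] FL_sym4[OF h1] FL_sym4[OF h2] FL_sym4[OF h3] FL_sym4[OF h4] FL_sym4[OF h5]
  have m: "p \<in> {a,b,c,d}" "q \<in> {a,b,c,d}" "r \<in> {a,b,c,d}" "t \<in> {a,b,c,d}" using S by auto
  show ?thesis unfolding F_def[symmetric] using m dp hs by auto
qed

lemma cmp3:
  assumes S: "{p,q,r} = {a,b,c}"
    and dp: "p\<noteq>q" "p\<noteq>r" "q\<noteq>r"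
    and w: "0 \<le> \<omega> a" "\<omega> a \<le> 1" "0 \<le> \<omega> b" "\<omega> b \<le> 1" "0 \<le> \<omega> c" "\<omega> c \<le> 1"
    and o: "\<omega> c \<le> \<omega> a" "\<omega> c \<le> \<omega> b"
    and u: "0 \<le> u" "0 \<le> e" "u + e \<le> 1"
  shows "FL u e (\<omega> a) (\<omega> b) (\<omega> c) 1 \<le> FL u e (\<omega> p) (\<omega> q) (\<omega> r) 1"
proof -
  define F where "F = FL u e (\<omega> a) (\<omega> b) (\<omega> c) 1"
  have h0: "F \<le> FL u e (\<omega> a) (\<omega> b) (\<omega> c) 1" unfolding F_def by simp
  have h1: "F \<le> FL u e (\<omega> a) (\<omega> c) (\<omega> b) 1" unfolding F_def
    by (rule FL_swap) (use w o u in auto)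
  have h3: "F \<le> FL u e (\<omega> b) (\<omega> c) (\<omega> a) 1" unfolding F_def
    by (subst FL_sym12, rule FL_swap) (use w o u in auto)
  note hs = FL_sym4[OF h0] FL_sym4[OF h1] FL_sym4[OF h3]
  have m: "p \<in> {a,b,c}" "q \<in> {a,b,c}" "r \<in> {a,b,c}" using S by auto
  show ?thesis unfolding F_def[symmetric] using m dp hs by auto
qed



lemma rest_card:
  assumes "valid_action N 2 {a,b}" "a \<noteq> b"
  shows "card ({..<N} - {a,b}) = N - 2" "{..<N} = {a,b} \<union> ({..<N} - {a,b})"
  using assms unfolding valid_action_def by (auto simp: card_Diff_subset)

lemma rest3:
  assumes "valid_action N 2 {a,b}" "a \<noteq> b" "N = 3"
  obtains c where "{..<N} = {a,b,c}" "c \<noteq> a" "c \<noteq> b"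
proof -
  have "card ({..<N} - {a,b}) = 1" using rest_card[OF assms(1,2)] assms(3) by simp
  then obtain c where c: "{..<N} - {a,b} = {c}" by (auto simp: card_1_singleton_iff)
  then have "{..<N} = {a,b,c}" "c \<noteq> a" "c \<noteq> b" using rest_card(2)[OF assms(1,2)] by auto
  then show ?thesis using that by blast
qed

lemma rest4:
  assumes "valid_action N 2 {a,b}" "a \<noteq> b" "N = 4"
  obtains c d where "{..<N} = {a,b,c,d}" "c \<noteq> a" "c \<noteq> b" "d \<noteq> a" "d \<noteq> b" "c \<noteq> d"
proof -
  have "card ({..<N} - {a,b}) = 2" using rest_card[OF assms(1,2)] assms(3) by simp
  then obtain c d where c: "{..<N} - {a,b} = {c,d}" "c \<noteq> d" by (auto simp: card_2_iff)
  then have "{..<N} = {a,b,c,d}" "c \<noteq> a" "c \<noteq> b" "d \<noteq> a" "d \<noteq> b" "c \<noteq> d"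
    using rest_card(2)[OF assms(1,2)] by auto
  then show ?thesis using that by blast
qed

lemma W4':
  assumes ud: "{..<N} = {a,b,c,d}" and dist: "a\<noteq>b" "a\<noteq>c" "a\<noteq>d" "b\<noteq>c" "b\<noteq>d" "c\<noteq>d"
    and wc: "0 \<le> \<omega> c" "\<omega> c \<le> 1" and wd: "0 \<le> \<omega> d" "\<omega> d \<le> 1"
    and p: "0 \<le> p11" "p11 \<le> p01" "p01 \<le> 1"
  shows "W N p01 p11 \<omega> {a,b} = 2 - FL (1-p01) (p01-p11) (\<omega> a) (\<omega> b) (\<omega> c) (\<omega> d)"
proof (cases "\<omega> c \<le> \<omega> d")
  case True
  then show ?thesis using W4[OF ud dist True wc wd p] by simp
next
  case False
  have ud': "{..<N} = {a,b,d,c}" using ud by auto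
  have "W N p01 p11 \<omega> {a,b} = 2 - FL (1-p01) (p01-p11) (\<omega> a) (\<omega> b) (\<omega> d) (\<omega> c)"
    using False by (intro W4[OF ud']) (use dist wc wd p in auto)
  then show ?thesis using FL_sym34 by metis
qed

lemma core:
  assumes N: "2 \<le> N" "N \<le> 4" and p: "0 \<le> p11" "p11 \<le> p01" "p01 \<le> 1"
    and w: "\<forall>i<N. 0 \<le> \<omega> i \<and> \<omega> i \<le> 1"
    and m: "myopic_action N 2 \<omega> Am" and A: "valid_action N 2 A"
  shows "W N p01 p11 \<omega> A \<le> W N p01 p11 \<omega> Am"
proof -
  have vAm: "valid_action N 2 Am" using m unfolding myopic_action_def by simp
  obtain a b where ab: "Am = {a,b}" "a \<noteq> b" using vAm unfolding valid_action_def card_2_iff by auto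
  obtain p q where pq: "A = {p,q}" "p \<noteq> q" using A unfolding valid_action_def card_2_iff by auto
  have my: "\<And>i j. i \<in> {a,b} \<Longrightarrow> j < N \<Longrightarrow> j \<notin> {a,b} \<Longrightarrow> \<omega> j \<le> \<omega> i"
    using m ab unfolding myopic_action_def by auto
  have ue: "0 \<le> 1 - p01" "0 \<le> p01 - p11" "(1 - p01) + (p01 - p11) \<le> 1" using p by auto
  have "N = 2 \<or> N = 3 \<or> N = 4" using N by auto
  then show ?thesis
  proof (elim disjE)
    assume N2: "N = 2"
    have "A = {..<N}" using A N2 unfolding valid_action_def by (intro card_subset_eq) auto
    moreover have "Am = {..<N}" using vAm N2 unfolding valid_action_def by (intro card_subset_eq) auto
    ultimately show ?thesis by simp
  next
    assume N3: "N = 3"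
    obtain c where c: "{..<N} = {a,b,c}" "c \<noteq> a" "c \<noteq> b" using rest3 vAm ab N3 by metis
    obtain r where r: "{..<N} = {p,q,r}" "r \<noteq> p" "r \<noteq> q" using rest3 A pq N3 by metis
    have S: "{p,q,r} = {a,b,c}" using c(1) r(1) by simp
    have lt: "a < N" "b < N" "c < N" using c(1) by auto
    have wa: "0 \<le> \<omega> a" "\<omega> a \<le> 1" "0 \<le> \<omega> b" "\<omega> b \<le> 1"
       "0 \<le> \<omega> c" "\<omega> c \<le> 1" using w lt by auto
    have ltp: "r < N" using r(1) by auto
    have wp: "0 \<le> \<omega> r" "\<omega> r \<le> 1" using w ltp by auto
    have o: "\<omega> c \<le> \<omega> a" "\<omega> c \<le> \<omega> b"
      using my[of a c] my[of b c] lt c(2-3) by auto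
    have e1: "W N p01 p11 \<omega> Am = 2 - FL (1-p01) (p01-p11) (\<omega> a) (\<omega> b) (\<omega> c) 1"
      unfolding ab(1) using W3[where \<omega>=\<omega>, OF c(1) ab(2) c(2)[symmetric] c(3)[symmetric] wa(5-6) p] .
    have e2: "W N p01 p11 \<omega> A = 2 - FL (1-p01) (p01-p11) (\<omega> p) (\<omega> q) (\<omega> r) 1"
      unfolding pq(1) using W3[where \<omega>=\<omega>, OF r(1) pq(2) r(2)[symmetric] r(3)[symmetric] wp p] .
    have "FL (1-p01) (p01-p11) (\<omega> a) (\<omega> b) (\<omega> c) 1 \<le> FL (1-p01) (p01-p11) (\<omega> p) (\<omega> q) (\<omega> r) 1"
      using cmp3[where \<omega>=\<omega>, OF S pq(2) r(2)[symmetric] r(3)[symmetric] wa o ue] .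
    then show ?thesis using e1 e2 by simp
  next
    assume N4: "N = 4"
    obtain c d where c: "{..<N} = {a,b,c,d}" "c \<noteq> a" "c \<noteq> b" "d \<noteq> a" "d \<noteq> b" "c \<noteq> d"
      using rest4 vAm ab N4 by metis
    obtain r t where r: "{..<N} = {p,q,r,t}" "r \<noteq> p" "r \<noteq> q" "t \<noteq> p" "t \<noteq> q" "r \<noteq> t"
      using rest4 A pq N4 by metis
    have S: "{p,q,r,t} = {a,b,c,d}" using c(1) r(1) by simp
    have lt: "a < N" "b < N" "c < N" "d < N" using c(1) by auto
    have wa: "0 \<le> \<omega> a" "\<omega> a \<le> 1" "0 \<le> \<omega> b" "\<omega> b \<le> 1"
       "0 \<le> \<omega> c" "\<omega> c \<le> 1" "0 \<le> \<omega> d" "\<omega> d \<le> 1" using w lt by auto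
    have ltp: "r < N" "t < N" using r(1) by auto
    have wp: "0 \<le> \<omega> r" "\<omega> r \<le> 1" "0 \<le> \<omega> t" "\<omega> t \<le> 1" using w ltp by auto
    have o: "\<omega> c \<le> \<omega> a" "\<omega> c \<le> \<omega> b" "\<omega> d \<le> \<omega> a" "\<omega> d \<le> \<omega> b"
      using my[of a c] my[of b c] my[of a d] my[of b d] lt c(2-5) by auto
    have e1: "W N p01 p11 \<omega> Am = 2 - FL (1-p01) (p01-p11) (\<omega> a) (\<omega> b) (\<omega> c) (\<omega> d)"
      unfolding ab(1) using W4'[where \<omega>=\<omega>, OF c(1) ab(2) c(2)[symmetric] c(4)[symmetric] c(3)[symmetric] c(5)[symmetric] c(6) wa(5-8) p] .
    have e2: "W N p01 p11 \<omega> A = 2 - FL (1-p01) (p01-p11) (\<omega> p) (\<omega> q) (\<omega> r) (\<omega> t)"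
      unfolding pq(1) using W4'[where \<omega>=\<omega>, OF r(1) pq(2) r(2)[symmetric] r(4)[symmetric] r(3)[symmetric] r(5)[symmetric] r(6) wp p] .
    have "FL (1-p01) (p01-p11) (\<omega> a) (\<omega> b) (\<omega> c) (\<omega> d) \<le> FL (1-p01) (p01-p11) (\<omega> p) (\<omega> q) (\<omega> r) (\<omega> t)"
      using cmp4[where \<omega>=\<omega>, OF S pq(2) r(2)[symmetric] r(4)[symmetric] r(3)[symmetric] r(5)[symmetric] r(6)
          ab(2) c(2)[symmetric] c(4)[symmetric] c(3)[symmetric] c(5)[symmetric] c(6) wa o ue] .
    then show ?thesis using e1 e2 by simp
  qed
qed



theorem theorem2:
  fixes N :: nat and p01 p11 :: real and \<omega> :: "nat \<Rightarrow> real" and \<pi>m :: policy2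
  assumes "2 \<le> N" and "N \<le> 4"
    and "0 \<le> p01" and "p01 \<le> 1" and "0 \<le> p11" and "p11 \<le> 1"
    and "p11 < p01"
    and "\<forall>i<N. 0 \<le> \<omega> i \<and> \<omega> i \<le> 1"
    and "myopic_policy2 N 2 p01 p11 \<omega> \<pi>m"
  shows "is_policy2 N 2 \<pi>m \<and>
         value2 p01 p11 \<omega> \<pi>m = (MAX \<pi> \<in> {\<pi>. is_policy2 N 2 \<pi>}. value2 p01 p11 \<omega> \<pi>)"
proof -
  obtain Am f where pm: "\<pi>m = (Am, f)" by (cases \<pi>m)
  have mA: "myopic_action N 2 \<omega> Am"
    and mf: "\<forall>obs\<in>observations Am. myopic_action N 2 (upd_belief p01 p11 \<omega> Am obs) (f obs)"
    using assms(9) unfolding myopic_policy2_def pm by auto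
  have pol: "is_policy2 N 2 \<pi>m" using mA mf unfolding is_policy2_def myopic_action_def pm by auto
  have ple: "p11 \<le> p01" using assms(7) by simp
  have upd1: "\<And>A obs i. i < N \<Longrightarrow> upd_belief p01 p11 \<omega> A obs i \<le> 1"
  proof -
    fix A obs i assume i: "i < N"
    have "tau p01 p11 (\<omega> i) \<le> p01" using tau_bounds(2)[of "\<omega> i" p11 p01] assms(8) i ple by auto
    then show "upd_belief p01 p11 \<omega> A obs i \<le> 1" unfolding upd_belief_def using assms(4,6) by auto
  qed
  have vm: "value2 p01 p11 \<omega> \<pi>m = W N p01 p11 \<omega> Am"
    unfolding value2_def W_def pm fst_conv snd_conv
  proof (intro arg_cong2[where f="(+)"] refl sum.cong arg_cong2[where f="(*)"])
    fix obs assume o: "obs \<in> observations Am"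
    then have mo: "myopic_action N 2 (upd_belief p01 p11 \<omega> Am obs) (f obs)" using mf by auto
    show "imm_reward (upd_belief p01 p11 \<omega> Am obs) (f obs) = best N (upd_belief p01 p11 \<omega> Am obs)"
      by (rule best_eq[symmetric]) (use mo upd1 in \<open>auto simp: myopic_action_def\<close>)
  qed
  have up: "value2 p01 p11 \<omega> \<pi> \<le> W N p01 p11 \<omega> (fst \<pi>)" if P: "is_policy2 N 2 \<pi>" for \<pi>
    unfolding value2_def W_def
  proof (intro add_left_mono sum_mono mult_left_mono)
    fix obs assume o: "obs \<in> observations (fst \<pi>)"
    show "imm_reward (upd_belief p01 p11 \<omega> (fst \<pi>) obs) (snd \<pi> obs)
          \<le> best N (upd_belief p01 p11 \<omega> (fst \<pi>) obs)"
      using P o unfolding is_policy2_def by (auto intro: best_ge)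
    have sub: "fst \<pi> \<subseteq> {..<N}" using P unfolding is_policy2_def valid_action_def by auto
    show "0 \<le> obs_prob \<omega> (fst \<pi>) obs" unfolding obs_prob_def
      by (rule prod_nonneg) (use sub assms(8) in auto)
  qed
  let ?S = "{\<pi>. is_policy2 N 2 \<pi>}"
  define T where "T = (SIGMA A:{A. A \<subseteq> {..<N}}. PiE (observations A) (\<lambda>_. Pow {..<N}))"
  have finT: "finite T" unfolding T_def
  proof (rule finite_SigmaI)
    show "finite {A. A \<subseteq> {..<N}}" by simp
    fix A assume "A \<in> {A. A \<subseteq> {..<N}}"
    then have "finite A" using finite_subset by auto
    then have "finite (observations A)" unfolding observations_def by (intro finite_PiE) auto
    then show "finite (PiE (observations A) (\<lambda>_. Pow {..<N}))" by (intro finite_PiE) auto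
  qed
  have sub: "value2 p01 p11 \<omega> ` ?S \<subseteq> value2 p01 p11 \<omega> ` T"
  proof
    fix v assume "v \<in> value2 p01 p11 \<omega> ` ?S"
    then obtain A g where P: "is_policy2 N 2 (A,g)" and v: "v = value2 p01 p11 \<omega> (A,g)" by auto
    have "(A, restrict g (observations A)) \<in> T"
      using P unfolding T_def is_policy2_def valid_action_def by auto
    moreover have "value2 p01 p11 \<omega> (A,g) = value2 p01 p11 \<omega> (A, restrict g (observations A))"
      unfolding value2_def by (auto intro!: sum.cong)
    ultimately show "v \<in> value2 p01 p11 \<omega> ` T" using v by blast
  qed
  have fin: "finite (value2 p01 p11 \<omega> ` ?S)" using finite_subset[OF sub] finT by auto
  have "(MAX \<pi> \<in> ?S. value2 p01 p11 \<omega> \<pi>) = value2 p01 p11 \<omega> \<pi>m"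
  proof (rule Max_eqI[OF fin])
    show "value2 p01 p11 \<omega> \<pi>m \<in> value2 p01 p11 \<omega> ` ?S" using pol by auto
    fix y assume "y \<in> value2 p01 p11 \<omega> ` ?S"
    then obtain \<pi> where P: "is_policy2 N 2 \<pi>" and y: "y = value2 p01 p11 \<omega> \<pi>" by auto
    have "valid_action N 2 (fst \<pi>)" using P unfolding is_policy2_def by auto
    then have "W N p01 p11 \<omega> (fst \<pi>) \<le> W N p01 p11 \<omega> Am"
      using core[OF assms(1,2) assms(5) ple assms(4) assms(8) mA] by auto
    then show "y \<le> value2 p01 p11 \<omega> \<pi>m" using up[OF P] vm y by simp
  qed
  then show ?thesis using pol by simp
qed

end
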